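(* Let $0<\alpha<1$, let $F=\ell\circ\lambda_\alpha$ where $\lambda_\alpha$ is the lens map, and let $\varphi$ be a Schwarz-type function. Let $R\in[0,1)$ be defined by $\frac{2R}{1+R^2}=\sin\frac{\alpha\pi}{2}$. Then $T_{F,\varphi}(f)\in\mathcal{P}$ for every $f\in\mathcal{P}$ if and only if $\|\varphi\|_\infty\le\frac{1-R}{1+R}$.
   Context: $\mathbb{D}$ is the open unit disk. $\mathcal{P}$ is the set of analytic $f$ on $\mathbb{D}$ with $\mathrm{Re}\,f>0$ and $f(0)=1$. A Schwarz-type function is an analytic $\varphi:\mathbb{D}\to\mathbb{D}$ with $\varphi(0)=0$. $\ell(z)=\frac{1+z}{1-z}$. For $0<\alpha<1$, the lens map is $\lambda_\alpha=\ell^{-1}\circ\ell^\alpha$, i.e. $\lambda_\alpha(z)=\frac{\ell(z)^\alpha-1}{\ell(z)^\alpha+1}$ (principal power), a conformal map of $\mathbb{D}$ onto a lens-shaped region bounded by two circular arcs symmetric about the real axis meeting at $\pm1$ at angle $\pi\alpha$; thus $F=\ell^\alpha$. $\|\varphi\|_\infty=\sup_{z\in\mathbb{D}}|\varphi(z)|$. $T_{F,\varphi}(f)=F\cdot(f\circ\varphi)$. *)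

theory Defs
  imports "HOL-Complex_Analysis.Complex_Analysis"
begin

definition unit_disk :: "complex set" where
  "unit_disk = ball 0 1"

definition caratheodory_class :: "(complex \<Rightarrow> complex) set" where
  "caratheodory_class = {f. f holomorphic_on unit_disk \<and> (\<forall>z\<in>unit_disk. Re (f z) > 0) \<and> f 0 = 1}"

definition schwarz_type :: "(complex \<Rightarrow> complex) \<Rightarrow> bool" where
  "schwarz_type \<phi> \<longleftrightarrow> \<phi> holomorphic_on unit_disk \<and> \<phi> ` unit_disk \<subseteq> unit_disk \<and> \<phi> 0 = 0"

definition ell :: "complex \<Rightarrow> complex" where
  "ell z = (1 + z) / (1 - z)"

definition lens_map :: "real \<Rightarrow> complex \<Rightarrow> complex" where
  "lens_map \<alpha> z = (ell z powr complex_of_real \<alpha> - 1) / (ell z powr complex_of_real \<alpha> + 1)"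

definition sup_norm :: "(complex \<Rightarrow> complex) \<Rightarrow> real" where
  "sup_norm \<phi> = (SUP z\<in>unit_disk. cmod (\<phi> z))"

definition wcomp :: "(complex \<Rightarrow> complex) \<Rightarrow> (complex \<Rightarrow> complex) \<Rightarrow> (complex \<Rightarrow> complex) \<Rightarrow> (complex \<Rightarrow> complex)" where
  "wcomp F \<phi> f = (\<lambda>z. F z * f (\<phi> z))"

end

theory Submission
  imports Defs
begin


lemma ell_components:
  assumes "v \<noteq> 1"
  shows "ell v = Complex ((1 - (Re v)\<^sup>2 - (Im v)\<^sup>2) / ((1 - Re v)\<^sup>2 + (Im v)\<^sup>2))
                        (2 * Im v / ((1 - Re v)\<^sup>2 + (Im v)\<^sup>2))"
proof -
  have D: "(1 - Re v)\<^sup>2 + (Im v)\<^sup>2 \<noteq> 0"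
    using assms by (metis complex_eq_iff one_complex.sel sum_power2_eq_zero_iff right_minus_eq zero_complex.sel minus_complex.sel)
  have n: "1 - v \<noteq> 0" using assms by simp
  show ?thesis unfolding ell_def
    using D n by (simp add: complex_eq_iff Re_divide Im_divide power2_eq_square field_simps)
qed

lemma re_ell:
  assumes "v \<noteq> 1"
  shows "Re (P * ell v) = (Re P * (1 - (cmod v)\<^sup>2) - 2 * Im P * Im v) / (cmod (1 - v))\<^sup>2"
  using assms by (simp add: ell_components cmod_power2 diff_divide_distrib add_divide_distrib algebra_simps)



lemma core:
  fixes \<alpha> y t r b :: real
  assumes a: "0 < \<alpha>" "\<alpha> < 1" and y: "\<bar>y\<bar> < pi/2" and t: "0 \<le> t" "t \<le> r" "r < 1"
    and b: "\<bar>b\<bar> \<le> t" and key: "(1 - r\<^sup>2) * cos (\<alpha>*pi/2) = 2 * r * sin (\<alpha>*pi/2)"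
  shows "(1 - t\<^sup>2) * cos (\<alpha> * y) - 2 * b * sin (\<alpha> * y) > 0"
proof -
  have ay: "\<bar>\<alpha> * y\<bar> < \<alpha> * pi / 2" using a y by (simp add: abs_mult)
  have ap: "\<alpha> * pi / 2 < pi / 2" using a by simp
  have c1: "cos (\<alpha> * y) > cos (\<alpha>*pi/2)"
    using cos_monotone_0_pi[of "\<bar>\<alpha> * y\<bar>" "\<alpha>*pi/2"] ay ap by simp
  have cpos: "cos (\<alpha> * y) > 0" using ay ap by (intro cos_gt_zero_pi; linarith)
  have s1: "\<bar>sin (\<alpha> * y)\<bar> \<le> sin (\<alpha>*pi/2)"
  proof (cases "\<alpha> * y \<ge> 0")
    case True
    have l: "\<alpha> * y \<le> \<alpha>*pi/2" "\<alpha> * y \<le> pi" using ay ap True by linarith+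
    have "sin (\<alpha>*y) \<ge> 0" using sin_ge_zero[of "\<alpha>*y"] True l by auto
    thus ?thesis using sin_monotone_2pi_le[of "\<alpha>*y" "\<alpha>*pi/2"] ap True l by auto
  next
    case False
    have l: "-\<alpha> * y \<le> \<alpha>*pi/2" "-\<alpha> * y \<le> pi" using ay ap False by linarith+
    have "sin (-\<alpha>*y) \<ge> 0" using sin_ge_zero[of "-\<alpha>*y"] False l by auto
    thus ?thesis using sin_monotone_2pi_le[of "-\<alpha>*y" "\<alpha>*pi/2"] ap False l by auto
  qed
  have r2: "1 - r\<^sup>2 > 0" using t by (simp add: abs_square_less_1)
  have "(1 - t\<^sup>2) * cos (\<alpha> * y) \<ge> (1 - r\<^sup>2) * cos (\<alpha> * y)"
    using t cpos by (intro mult_right_mono) (auto intro: power_mono)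
  moreover have "(1 - r\<^sup>2) * cos (\<alpha> * y) > (1 - r\<^sup>2) * cos (\<alpha>*pi/2)"
    using r2 c1 by simp
  moreover have "2 * r * sin (\<alpha>*pi/2) \<ge> 2 * t * \<bar>sin (\<alpha> * y)\<bar>"
    using s1 t by (intro mult_mono) auto
  moreover have "2 * t * \<bar>sin (\<alpha> * y)\<bar> \<ge> 2 * b * sin (\<alpha> * y)"
  proof -
    have "b * sin (\<alpha> * y) \<le> \<bar>b\<bar> * \<bar>sin (\<alpha> * y)\<bar>" by (metis abs_ge_self abs_mult)
    also have "\<dots> \<le> t * \<bar>sin (\<alpha> * y)\<bar>" using b by (intro mult_right_mono) auto
    finally show ?thesis by simp
  qed
  ultimately show ?thesis using key by linarith
qed



lemma ell_inv:
  fixes W :: complex assumes n: "W + 1 \<noteq> 0"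
  shows "ell ((W - 1) / (W + 1)) = W"
proof -
  have a: "1 + (W - 1) / (W + 1) = 2 * W / (W + 1)" using n by (simp add: field_simps)
  have b: "1 - (W - 1) / (W + 1) = 2 / (W + 1)" using n by (simp add: field_simps)
  have c: "2 / (W + 1) \<noteq> 0" using n by simp
  have "2 * W / (W + 1) = W * (2 / (W + 1))" by simp
  thus ?thesis unfolding ell_def a b using c by simp
qed

definition tau :: "complex \<Rightarrow> complex" where "tau w = (exp w - 1) / (exp w + 1)"

lemma ell_disk_Re: assumes "z \<in> unit_disk" shows "Re (ell z) > 0"
proof -
  have z: "cmod z < 1" using assms by (simp add: unit_disk_def)
  hence z1: "z \<noteq> 1" by auto
  have "Re (1 * ell z) = (1 - (cmod z)\<^sup>2) / (cmod (1 - z))\<^sup>2"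
    using re_ell[OF z1, of 1] by simp
  moreover have "(cmod z)\<^sup>2 < 1" using z by (simp add: power_less_one_iff norm_ge_zero abs_square_less_1)
  moreover have "cmod (1 - z) > 0" using z1 by simp
  ultimately show ?thesis by simp
qed

lemma tau_props:
  assumes "\<bar>Im w\<bar> < pi/2"
  shows "tau w \<in> unit_disk" "ell (tau w) = exp w"
proof -
  have re: "Re (exp w) > 0" using assms by (simp add: Re_exp cos_gt_zero_pi)
  have n: "exp w + 1 \<noteq> 0"
  proof
    assume "exp w + 1 = 0" then have "exp w = -1" by (simp only: eq_neg_iff_add_eq_0)
    with re show False by simp
  qed
  have e1: "(cmod (exp w - 1))\<^sup>2 = (Re (exp w) - 1)\<^sup>2 + (Im (exp w))\<^sup>2" by (simp add: cmod_power2)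
  have e2: "(cmod (exp w + 1))\<^sup>2 = (Re (exp w) + 1)\<^sup>2 + (Im (exp w))\<^sup>2" by (simp add: cmod_power2)
  have "(cmod (exp w - 1))\<^sup>2 < (cmod (exp w + 1))\<^sup>2"
    unfolding e1 e2 using re by (simp add: power2_eq_square algebra_simps)
  hence "cmod (exp w - 1) < cmod (exp w + 1)"
    by (meson norm_ge_zero power_less_imp_less_base)
  thus "tau w \<in> unit_disk" using n by (simp add: tau_def unit_disk_def norm_divide divide_less_eq)
  show "ell (tau w) = exp w" using ell_inv[OF n] by (simp add: tau_def)
qed

lemma tau_ln_ell:
  assumes "z \<in> unit_disk"
  shows "tau (ln (ell z)) = z" "\<bar>Im (ln (ell z))\<bar> < pi/2"
proof -
  have re: "Re (ell z) > 0" using ell_disk_Re[OF assms] .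
  hence nz: "ell z \<noteq> 0" by auto
  have z1: "1 - z \<noteq> 0" using assms by (auto simp: unit_disk_def)
  show "tau (ln (ell z)) = z" using nz z1 by (simp add: tau_def ell_def field_simps)
  show "\<bar>Im (ln (ell z))\<bar> < pi/2" using Re_Ln_pos_lt_imp[OF re] .
qed

lemma F_eq:
  assumes "z \<in> unit_disk" "0 < \<alpha>" "\<alpha> < 1"
  shows "(ell \<circ> lens_map \<alpha>) z = exp (complex_of_real \<alpha> * ln (ell z))"
proof -
  have re: "Re (ell z) > 0" using ell_disk_Re[OF assms(1)] .
  hence nz: "ell z \<noteq> 0" by auto
  define W where "W = exp (complex_of_real \<alpha> * ln (ell z))"
  have im: "\<bar>Im (ln (ell z))\<bar> < pi/2" using tau_ln_ell(2)[OF assms(1)] .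
  have "\<bar>\<alpha> * Im (ln (ell z))\<bar> < pi/2"
  proof -
    have "\<bar>\<alpha> * Im (ln (ell z))\<bar> = \<alpha> * \<bar>Im (ln (ell z))\<bar>" using assms by (simp add: abs_mult)
    also have "\<dots> \<le> \<bar>Im (ln (ell z))\<bar>" using assms by (simp add: mult_left_le_one_le)
    finally show ?thesis using im by linarith
  qed
  hence "Re W > 0" unfolding W_def using assms
    by (simp add: Re_exp cos_gt_zero_pi)
  hence n: "W + 1 \<noteq> 0"
  proof -
    assume r: "Re W > 0"
    show ?thesis
    proof
      assume "W + 1 = 0" then have "W = -1" by (simp only: eq_neg_iff_add_eq_0)
      with r show False by simp
    qed
  qed
  have pw: "ell z powr complex_of_real \<alpha> = W" using nz by (simp add: powr_def W_def)
  have l: "lens_map \<alpha> z = (W - 1) / (W + 1)" by (simp add: lens_map_def pw)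
  have "ell ((W - 1) / (W + 1)) = W" using ell_inv[OF n] .
  thus ?thesis using l by (simp add: W_def)
qed



lemma ell_holo: "ell holomorphic_on unit_disk"
  unfolding ell_def[abs_def] unit_disk_def
  by (intro holomorphic_intros) auto

lemma F_holo:
  assumes "0 < \<alpha>" "\<alpha> < 1"
  shows "(\<lambda>z. exp (complex_of_real \<alpha> * ln (ell z))) holomorphic_on unit_disk"
proof -
  have "ell z \<notin> \<real>\<^sub>\<le>\<^sub>0" if "z \<in> unit_disk" for z
    using ell_disk_Re[OF that] by (auto simp: complex_nonpos_Reals_iff)
  thus ?thesis by (intro holomorphic_intros ell_holo)
qed

lemma F0: "(ell \<circ> lens_map \<alpha>) 0 = 1"
  by (simp add: lens_map_def ell_def)

lemma sup_upper:
  assumes "schwarz_type \<phi>" "z \<in> unit_disk"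
  shows "cmod (\<phi> z) \<le> sup_norm \<phi>"
  unfolding sup_norm_def
proof (rule cSUP_upper[OF assms(2)])
  show "bdd_above ((\<lambda>z. cmod (\<phi> z)) ` unit_disk)"
    using assms(1) by (intro bdd_aboveI[of _ 1]) (auto simp: schwarz_type_def unit_disk_def)
qed

lemma exp_Re_Im:
  "Re (exp (complex_of_real \<alpha> * w)) = exp (\<alpha> * Re w) * cos (\<alpha> * Im w)"
  "Im (exp (complex_of_real \<alpha> * w)) = exp (\<alpha> * Re w) * sin (\<alpha> * Im w)"
  by (simp_all add: Re_exp Im_exp)

lemma suff:
  fixes \<alpha> r :: real
  assumes a: "0 < \<alpha>" "\<alpha> < 1" and sch: "schwarz_type \<phi>"
    and r: "0 \<le> r" "r < 1" and key: "(1 - r\<^sup>2) * cos (\<alpha>*pi/2) = 2 * r * sin (\<alpha>*pi/2)"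
    and sn: "sup_norm \<phi> \<le> r"
    and f: "f \<in> caratheodory_class"
  shows "wcomp (ell \<circ> lens_map \<alpha>) \<phi> f \<in> caratheodory_class"
proof -
  have fh: "f holomorphic_on unit_disk" and fre: "\<And>z. z \<in> unit_disk \<Longrightarrow> Re (f z) > 0" and f0: "f 0 = 1"
    using f by (auto simp: caratheodory_class_def)
  have ph: "\<phi> holomorphic_on unit_disk" and pd: "\<phi> ` unit_disk \<subseteq> unit_disk" and p0: "\<phi> 0 = 0"
    using sch by (auto simp: schwarz_type_def)
  have eqF: "\<And>z. z \<in> unit_disk \<Longrightarrow> wcomp (ell \<circ> lens_map \<alpha>) \<phi> f z = exp (complex_of_real \<alpha> * ln (ell z)) * f (\<phi> z)"
    using F_eq a by (simp add: wcomp_def)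
  have holo: "wcomp (ell \<circ> lens_map \<alpha>) \<phi> f holomorphic_on unit_disk"
  proof -
    have "(f \<circ> \<phi>) holomorphic_on unit_disk" by (rule holomorphic_on_compose_gen[OF ph fh pd])
    hence "(\<lambda>z. exp (complex_of_real \<alpha> * ln (ell z)) * f (\<phi> z)) holomorphic_on unit_disk"
      using F_holo[OF a] by (intro holomorphic_on_mult) (auto simp: o_def)
    thus ?thesis using eqF by (subst holomorphic_cong[OF refl]) auto
  qed
  have val0: "wcomp (ell \<circ> lens_map \<alpha>) \<phi> f 0 = 1"
    by (simp add: wcomp_def F0 p0 f0 del: comp_apply)
  have pos: "Re (wcomp (ell \<circ> lens_map \<alpha>) \<phi> f z) > 0" if z: "z \<in> unit_disk" for z
  proof -
    define u where "u = \<phi> z"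
    have u: "u \<in> unit_disk" using pd z by (auto simp: u_def)
    have ur: "cmod u \<le> r" using sup_upper[OF sch z] sn by (simp add: u_def)
    define \<omega> where "\<omega> = (\<lambda>x. (f x - 1) / (f x + 1))"
    have fn: "f x + 1 \<noteq> 0" if "x \<in> unit_disk" for x
    proof
      assume "f x + 1 = 0" then have "f x = -1" by (simp only: eq_neg_iff_add_eq_0)
      with fre[OF that] show False by simp
    qed
    have om_lt: "cmod (\<omega> x) < 1" if "x \<in> unit_disk" for x
    proof -
      have re: "Re (f x) > 0" using fre[OF that] .
      have e1: "(cmod (f x - 1))\<^sup>2 = (Re (f x) - 1)\<^sup>2 + (Im (f x))\<^sup>2" by (simp add: cmod_power2)
      have e2: "(cmod (f x + 1))\<^sup>2 = (Re (f x) + 1)\<^sup>2 + (Im (f x))\<^sup>2" by (simp add: cmod_power2)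
      have "(cmod (f x - 1))\<^sup>2 < (cmod (f x + 1))\<^sup>2"
        unfolding e1 e2 using re by (simp add: power2_eq_square algebra_simps)
      hence "cmod (f x - 1) < cmod (f x + 1)"
        by (meson norm_ge_zero power_less_imp_less_base)
      thus ?thesis using fn[OF that] by (simp add: \<omega>_def norm_divide divide_less_eq)
    qed
    have om_h: "\<omega> holomorphic_on ball 0 1"
      unfolding \<omega>_def using fh fn by (intro holomorphic_intros) (auto simp: unit_disk_def)
    have om0: "\<omega> 0 = 0" by (simp add: \<omega>_def f0)
    have "cmod (\<omega> u) \<le> cmod u"
      using Schwarz_Lemma(1)[OF om_h om0, of u] om_lt u by (auto simp: unit_disk_def)
    define v where "v = \<omega> u"
    have vr: "cmod v \<le> r" using \<open>cmod (\<omega> u) \<le> cmod u\<close> ur by (simp add: v_def)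
    have v1: "v \<noteq> 1" using om_lt[OF u] by (auto simp: v_def)
    have fu: "f u = ell v" using ell_inv[OF fn[OF u]] by (simp add: v_def \<omega>_def)
    define w where "w = ln (ell z)"
    have wy: "\<bar>Im w\<bar> < pi/2" using tau_ln_ell(2)[OF z] by (simp add: w_def)
    have c: "(1 - (cmod v)\<^sup>2) * cos (\<alpha> * Im w) - 2 * Im v * sin (\<alpha> * Im w) > 0"
      using core[OF a wy norm_ge_zero vr r(2) _ key] abs_Im_le_cmod by blast
    have "Re (exp (complex_of_real \<alpha> * w) * ell v) =
        (exp (\<alpha> * Re w) * ((1 - (cmod v)\<^sup>2) * cos (\<alpha> * Im w) - 2 * Im v * sin (\<alpha> * Im w))) / (cmod (1 - v))\<^sup>2"
      unfolding re_ell[OF v1] exp_Re_Im by (simp add: algebra_simps)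
    also have "\<dots> > 0" using c v1 by (intro divide_pos_pos mult_pos_pos) auto
    finally have "Re (exp (complex_of_real \<alpha> * w) * ell v) > 0" .
    moreover have "f (\<phi> z) = ell v" using fu by (simp add: u_def)
    ultimately show ?thesis by (simp add: eqF[OF z] w_def)
  qed
  show ?thesis using holo val0 pos by (auto simp: caratheodory_class_def)
qed



lemma pointwise:
  assumes a: "0 < \<alpha>" "\<alpha> < 1" and sch: "schwarz_type \<phi>"
    and H: "\<forall>f\<in>caratheodory_class. wcomp (ell \<circ> lens_map \<alpha>) \<phi> f \<in> caratheodory_class"
    and w: "\<bar>Im w\<bar> < pi/2" and v: "cmod v = cmod (\<phi> (tau w))"
  shows "Re (exp (complex_of_real \<alpha> * w) * ell v) > 0"
proof -
  define z where "z = tau w"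
  have z: "z \<in> unit_disk" using tau_props(1)[OF w] by (simp add: z_def)
  have ez: "ell z = exp w" using tau_props(2)[OF w] by (simp add: z_def)
  have lnw: "ln (ell z) = w" unfolding ez using w by (intro Ln_exp) auto
  have pd: "\<phi> ` unit_disk \<subseteq> unit_disk" using sch by (auto simp: schwarz_type_def)
  show ?thesis
  proof (cases "\<phi> z = 0")
    case True
    hence "v = 0" using v by (simp add: z_def)
    moreover have "\<bar>\<alpha> * Im w\<bar> < pi/2"
    proof -
      have "\<bar>\<alpha> * Im w\<bar> = \<alpha> * \<bar>Im w\<bar>" using a by (simp add: abs_mult)
      also have "\<dots> \<le> \<bar>Im w\<bar>" using a by (simp add: mult_left_le_one_le)
      finally show ?thesis using w by linarith
    qed
    ultimately show ?thesis by (simp add: ell_def exp_Re_Im cos_gt_zero_pi)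
  next
    case False
    define e where "e = v / \<phi> z"
    have e1: "cmod e = 1" using False v by (simp add: e_def norm_divide z_def)
    have ev: "e * \<phi> z = v" using False by (simp add: e_def)
    define f where "f = (\<lambda>u. ell (e * u))"
    have ed: "e * u \<in> unit_disk" if "u \<in> unit_disk" for u
      using that e1 by (simp add: unit_disk_def norm_mult)
    have "f \<in> caratheodory_class"
    proof -
      have "f holomorphic_on unit_disk"
        unfolding f_def ell_def using ed
        by (intro holomorphic_intros) (auto simp: unit_disk_def; metis norm_one less_irrefl)
      moreover have "Re (f u) > 0" if "u \<in> unit_disk" for u
        using ell_disk_Re[OF ed[OF that]] by (simp add: f_def)
      moreover have "f 0 = 1" by (simp add: f_def ell_def)
      ultimately show ?thesis by (auto simp: caratheodory_class_def)
    qed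
    with H have "wcomp (ell \<circ> lens_map \<alpha>) \<phi> f \<in> caratheodory_class" by blast
    hence "Re (wcomp (ell \<circ> lens_map \<alpha>) \<phi> f z) > 0" using z by (auto simp: caratheodory_class_def)
    thus ?thesis using F_eq[OF z a] lnw ev by (simp add: wcomp_def f_def)
  qed
qed

lemma strip_bound:
  assumes a: "0 < \<alpha>" "\<alpha> < 1" and sch: "schwarz_type \<phi>"
    and H: "\<forall>f\<in>caratheodory_class. wcomp (ell \<circ> lens_map \<alpha>) \<phi> f \<in> caratheodory_class"
    and w: "\<bar>Im w\<bar> < pi/2"
  shows "(1 - (cmod (\<phi> (tau w)))\<^sup>2) * cos (\<alpha> * Im w) > 2 * cmod (\<phi> (tau w)) * \<bar>sin (\<alpha> * Im w)\<bar>"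
proof -
  define s where "s = cmod (\<phi> (tau w))"
  have s1: "s < 1"
  proof -
    have "\<phi> (tau w) \<in> unit_disk" using sch tau_props(1)[OF w] by (auto simp: schwarz_type_def)
    thus ?thesis by (simp add: s_def unit_disk_def)
  qed
  have s0: "s \<ge> 0" by (simp add: s_def)
  have gen: "(1 - s\<^sup>2) * cos (\<alpha> * Im w) - 2 * (\<sigma> * s) * sin (\<alpha> * Im w) > 0" if \<sigma>: "\<sigma> = 1 \<or> \<sigma> = -1" for \<sigma> :: real
  proof -
    define v where "v = Complex 0 (\<sigma> * s)"
    have cv: "cmod v = s" using \<sigma> s0 by (auto simp: v_def cmod_def)
    have v1: "v \<noteq> 1" by (simp add: v_def complex_eq_iff)
    have p: "Re (exp (complex_of_real \<alpha> * w) * ell v) > 0"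
      using pointwise[OF a sch H w, of v] cv by (simp add: s_def)
    have d: "(cmod (1 - v))\<^sup>2 > 0" using v1 by simp
    have eq: "Re (exp (complex_of_real \<alpha> * w) * ell v) =
        exp (\<alpha> * Re w) * ((1 - s\<^sup>2) * cos (\<alpha> * Im w) - 2 * (\<sigma> * s) * sin (\<alpha> * Im w)) / (cmod (1 - v))\<^sup>2"
        (is "_ = ?N / ?D")
      unfolding re_ell[OF v1] exp_Re_Im cv by (simp add: v_def algebra_simps)
    have q: "0 < ?N / ?D" using p eq by linarith
    have "?N = (?N / ?D) * ?D" using d by simp
    also have "\<dots> > 0" using q d by (rule mult_pos_pos)
    finally have "?N > 0" .
    thus ?thesis by (simp add: zero_less_mult_iff)
  qed
  from gen[of 1] gen[of "-1"] show ?thesis unfolding s_def[symmetric]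
    by (cases "sin (\<alpha> * Im w) \<ge> 0") (auto simp: abs_if)
qed



lemma tau_den: assumes "\<bar>Im w\<bar> < pi/2" shows "exp w + 1 \<noteq> 0"
proof
  have re: "Re (exp w) > 0" using assms by (simp add: Re_exp cos_gt_zero_pi)
  assume "exp w + 1 = 0" then have "exp w = -1" by (simp only: eq_neg_iff_add_eq_0)
  with re show False by simp
qed

lemma norm_h:
  "norm (\<phi> (tau w) * exp (- complex_of_real \<epsilon> * (exp w + exp (- w)))) =
     cmod (\<phi> (tau w)) * exp (- (\<epsilon> * (cos (Im w) * (exp (Re w) + exp (- Re w)))))"
  by (simp add: norm_mult Re_exp algebra_simps)

lemma g_neg:
  fixes r r1 c sn :: real
  assumes "0 < r" "r < r1" "r1 < 1" "c > 0" "(1 - r\<^sup>2) * c = 2 * r * sn"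
  shows "(1 - r1\<^sup>2) * c - 2 * r1 * sn < 0"
proof -
  have br: "(1 - r1\<^sup>2) * r - r1 * (1 - r\<^sup>2) = (r - r1) * (1 + r * r1)" by (simp add: power2_eq_square algebra_simps)
  have "0 < r * r1" using assms by simp
  hence p: "0 < 1 + r * r1" by linarith
  have "(r - r1) * (1 + r * r1) < 0" using assms(2) p by (simp add: mult_neg_pos)
  hence cb: "c * ((1 - r1\<^sup>2) * r - r1 * (1 - r\<^sup>2)) < 0" using br assms(4) by (simp add: mult_pos_neg)
  have "r * ((1 - r1\<^sup>2) * c - 2 * r1 * sn) = c * ((1 - r1\<^sup>2) * r - r1 * (1 - r\<^sup>2)) + r1 * ((1 - r\<^sup>2) * c - 2 * r * sn)"
    by (simp add: algebra_simps)
  also have "\<dots> < 0" using cb assms(5) by simp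
  finally show ?thesis using assms(1) by (simp add: mult_less_0_iff)
qed



lemma line_bound:
  assumes a: "0 < \<alpha>" "\<alpha> < 1" and sch: "schwarz_type \<phi>"
    and H: "\<forall>f\<in>caratheodory_class. wcomp (ell \<circ> lens_map \<alpha>) \<phi> f \<in> caratheodory_class"
    and \<beta>: "0 < \<beta>" "\<beta> < pi/2" and g: "(1 - r1\<^sup>2) * cos (\<alpha> * \<beta>) - 2 * r1 * sin (\<alpha> * \<beta>) < 0"
    and r1: "0 \<le> r1"
    and w: "\<bar>Im w\<bar> = \<beta>"
  shows "cmod (\<phi> (tau w)) < r1"
proof (rule ccontr)
  define s where "s = cmod (\<phi> (tau w))"
  assume "\<not> cmod (\<phi> (tau w)) < r1"
  hence s: "r1 \<le> s" by (simp add: s_def)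
  have wl: "\<bar>Im w\<bar> < pi/2" using w \<beta> by simp
  have sb: "(1 - s\<^sup>2) * cos (\<alpha> * Im w) > 2 * s * \<bar>sin (\<alpha> * Im w)\<bar>"
    using strip_bound[OF a sch H wl] by (simp add: s_def)
  have "\<alpha> * \<beta> \<le> \<beta>" using a \<beta> by (simp add: mult_left_le_one_le)
  hence ab: "\<alpha> * \<beta> < pi/2" using \<beta> by linarith
  have cI: "cos (\<alpha> * Im w) = cos (\<alpha> * \<beta>)" and sI: "\<bar>sin (\<alpha> * Im w)\<bar> = sin (\<alpha> * \<beta>)"
  proof -
    have s0: "sin (\<alpha> * \<beta>) \<ge> 0" using a \<beta> ab by (intro sin_ge_zero) auto
    consider "Im w = \<beta>" | "Im w = - \<beta>" using w by linarith
    then show "cos (\<alpha> * Im w) = cos (\<alpha> * \<beta>)" "\<bar>sin (\<alpha> * Im w)\<bar> = sin (\<alpha> * \<beta>)"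
      by (cases; simp add: s0)+
  qed
  have "0 < \<alpha> * \<beta>" using a \<beta> by simp
  hence c0: "cos (\<alpha> * \<beta>) \<ge> 0" using ab pi_gt_zero by (intro cos_ge_zero; linarith)
  have si0: "sin (\<alpha> * \<beta>) \<ge> 0" using a \<beta> ab by (intro sin_ge_zero) auto
  have "(1 - s\<^sup>2) * cos (\<alpha> * \<beta>) \<le> (1 - r1\<^sup>2) * cos (\<alpha> * \<beta>)"
    using s r1 c0 by (intro mult_right_mono) (auto intro: power_mono)
  moreover have "2 * r1 * sin (\<alpha> * \<beta>) \<le> 2 * s * sin (\<alpha> * \<beta>)"
    using s si0 by (intro mult_right_mono) auto
  moreover have "(1 - s\<^sup>2) * cos (\<alpha> * \<beta>) > 2 * s * sin (\<alpha> * \<beta>)" using sb unfolding cI sI .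
  ultimately show False using g by linarith
qed



lemma tau_holo: "tau holomorphic_on {w. \<bar>Im w\<bar> < pi/2}"
  unfolding tau_def[abs_def] using tau_den by (intro holomorphic_intros) auto

lemma PL:
  assumes sch: "schwarz_type \<phi>" and \<beta>: "0 < \<beta>" "\<beta> < pi/2" and r1: "0 < r1" "r1 < 1"
    and line: "\<And>w. \<bar>Im w\<bar> = \<beta> \<Longrightarrow> cmod (\<phi> (tau w)) < r1"
    and w0: "\<bar>Im w0\<bar> < \<beta>"
  shows "cmod (\<phi> (tau w0)) \<le> r1"
proof (rule ccontr)
  define S where "S = {w. \<bar>Im w\<bar> < pi/2}"
  define s0 where "s0 = cmod (\<phi> (tau w0))"
  assume "\<not> cmod (\<phi> (tau w0)) \<le> r1"
  hence s0r: "r1 < s0" by (simp add: s0_def)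
  define q where "q = s0 / r1"
  have q1: "q > 1" using s0r r1 by (simp add: q_def)
  define K where "K = cos (Im w0) * (exp (Re w0) + exp (- Re w0))"
  have cw0: "cos (Im w0) > 0" using w0 \<beta> by (intro cos_gt_zero_pi) auto
  have K: "K > 0" unfolding K_def using cw0 by (intro mult_pos_pos add_pos_pos) auto
  define \<epsilon> where "\<epsilon> = ln q / (2 * K)"
  have lq: "ln q > 0" using q1 by simp
  have \<epsilon>: "\<epsilon> > 0" using lq K by (simp add: \<epsilon>_def)
  define c0 where "c0 = cos \<beta>"
  have c0: "c0 > 0" using \<beta> by (simp add: c0_def cos_gt_zero_pi)
  define L where "L = ln (1 / r1)"
  have L: "L > 0" using r1 by (simp add: L_def)
  define X where "X = \<bar>Re w0\<bar> + 1 + ln (L / (\<epsilon> * c0) + 1)"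
  have "L / (\<epsilon> * c0) > 0" using L \<epsilon> c0 by simp
  hence lnp: "ln (L / (\<epsilon> * c0) + 1) > 0" by (intro ln_gt_zero) simp
  have X0: "\<bar>Re w0\<bar> < X" using lnp by (simp add: X_def)
  have XL: "\<epsilon> * c0 * exp X \<ge> L"
  proof -
    have "exp X \<ge> exp (ln (L / (\<epsilon> * c0) + 1))" unfolding X_def by simp
    also have "exp (ln (L / (\<epsilon> * c0) + 1)) = L / (\<epsilon> * c0) + 1"
      using L \<epsilon> c0 by (intro exp_ln) (simp add: add_pos_pos)
    finally have "exp X \<ge> L / (\<epsilon> * c0)" by simp
    hence "\<epsilon> * c0 * exp X \<ge> \<epsilon> * c0 * (L / (\<epsilon> * c0))" using \<epsilon> c0 by (intro mult_left_mono) auto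
    thus ?thesis using \<epsilon> c0 by simp
  qed
  define h where "h = (\<lambda>w. \<phi> (tau w) * exp (- complex_of_real \<epsilon> * (exp w + exp (- w))))"
  have ph: "\<phi> holomorphic_on unit_disk" and pd: "\<phi> ` unit_disk \<subseteq> unit_disk"
    using sch by (auto simp: schwarz_type_def)
  have tS: "tau ` S \<subseteq> unit_disk" using tau_props(1) by (auto simp: S_def)
  have hh: "h holomorphic_on S"
  proof -
    have "(\<phi> \<circ> tau) holomorphic_on S"
      using holomorphic_on_compose_gen[OF tau_holo ph] tS by (simp add: S_def)
    thus ?thesis unfolding h_def by (intro holomorphic_intros) (auto simp: o_def)
  qed
  define a where "a = Complex (- X) (- \<beta>)"
  define b where "b = Complex X \<beta>"
  have w0box: "w0 \<in> box a b" using X0 w0 by (auto simp: a_def b_def box_complex_eq)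
  have ne: "box a b \<noteq> {}" using w0box by auto
  have cbS: "cbox a b \<subseteq> S" using \<beta> by (auto simp: a_def b_def cbox_complex_eq S_def)
  have bound: "norm (h w) \<le> r1" if w: "w \<in> frontier (box a b)" for w
  proof -
    have wf: "w \<in> cbox a b" "w \<notin> box a b"
      using w ne by (auto simp: frontier_def interior_open[OF open_box])
    hence wr: "\<bar>Re w\<bar> \<le> X" "\<bar>Im w\<bar> \<le> \<beta>" and wor: "\<bar>Re w\<bar> = X \<or> \<bar>Im w\<bar> = \<beta>"
      by (auto simp: a_def b_def cbox_complex_eq box_complex_eq)
    have cw: "cos (Im w) \<ge> c0"
      using cos_monotone_0_pi_le[of "\<bar>Im w\<bar>" \<beta>] wr \<beta> by (simp add: c0_def)
    have ee: "exp (Re w) + exp (- Re w) > 0" by (simp add: add_pos_pos)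
    have nh: "norm (h w) = cmod (\<phi> (tau w)) * exp (- (\<epsilon> * (cos (Im w) * (exp (Re w) + exp (- Re w)))))"
      unfolding h_def by (rule norm_h)
    have wS: "w \<in> S" using cbS wf by auto
    have "\<phi> (tau w) \<in> unit_disk" using pd tS wS by auto
    hence p1: "cmod (\<phi> (tau w)) < 1" by (simp add: unit_disk_def)
    from wor show ?thesis
    proof
      assume "\<bar>Re w\<bar> = X"
      hence "exp (Re w) + exp (- Re w) \<ge> exp X"
        by (cases "Re w \<ge> 0") (auto simp: add_increasing add_increasing2)
      hence "cos (Im w) * (exp (Re w) + exp (- Re w)) \<ge> c0 * exp X"
        using cw c0 ee by (intro mult_mono) auto
      hence "\<epsilon> * (cos (Im w) * (exp (Re w) + exp (- Re w))) \<ge> L"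
        using XL \<epsilon> by (smt (verit, best) mult.assoc mult_left_mono)
      hence "exp (- (\<epsilon> * (cos (Im w) * (exp (Re w) + exp (- Re w))))) \<le> exp (- L)" by simp
      also have "exp (- L) = r1" using r1 by (simp add: L_def exp_minus)
      finally have "exp (- (\<epsilon> * (cos (Im w) * (exp (Re w) + exp (- Re w))))) \<le> r1" .
      moreover have "cmod (\<phi> (tau w)) \<le> 1" using p1 by simp
      ultimately show ?thesis unfolding nh
        using mult_mono[of "cmod (\<phi> (tau w))" 1 "exp (- (\<epsilon> * (cos (Im w) * (exp (Re w) + exp (- Re w)))))" r1] r1 by simp
    next
      assume "\<bar>Im w\<bar> = \<beta>"
      hence lt: "cmod (\<phi> (tau w)) < r1" by (rule line)
      have "\<epsilon> * (cos (Im w) * (exp (Re w) + exp (- Re w))) \<ge> 0"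
        using \<epsilon> cw c0 ee by simp
      hence "exp (- (\<epsilon> * (cos (Im w) * (exp (Re w) + exp (- Re w))))) \<le> 1" by simp
      hence "norm (h w) \<le> cmod (\<phi> (tau w))" unfolding nh
        by (simp add: mult_left_le)
      thus ?thesis using lt by simp
    qed
  qed
  have "norm (h w0) \<le> r1"
  proof (rule maximum_modulus_frontier[where S = "box a b" and f = h and \<xi> = w0 and B = r1])
    show "h holomorphic_on interior (box a b)"
    proof -
      have "box a b \<subseteq> S" using cbS box_subset_cbox by blast
      thus ?thesis by (simp add: interior_open[OF open_box] holomorphic_on_subset[OF hh])
    qed
    show "continuous_on (closure (box a b)) h"
      using holomorphic_on_imp_continuous_on[OF hh] cbS ne by (auto intro: continuous_on_subset)
  qed (use bound w0box in auto)
  moreover have "norm (h w0) = s0 * exp (- (\<epsilon> * K))"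
    unfolding h_def norm_h s0_def K_def ..
  moreover have "\<epsilon> * K = ln q / 2" using K by (simp add: \<epsilon>_def)
  ultimately have le: "s0 * exp (- (ln q / 2)) \<le> r1" by simp
  have "exp (ln q / 2) < exp (ln q)" using lq by simp
  also have "exp (ln q) = q" using q1 by simp
  finally have "exp (ln q / 2) < q" .
  hence "s0 / q < s0 / exp (ln q / 2)" using s0r r1 q1
    by (intro divide_strict_left_mono) auto
  also have "s0 / exp (ln q / 2) = s0 * exp (- (ln q / 2))" by (simp add: exp_minus field_simps)
  also have "s0 / q = r1" using r1 s0r by (simp add: q_def)
  finally show False using le by simp
qed



lemma nec:
  assumes a: "0 < \<alpha>" "\<alpha> < 1" and sch: "schwarz_type \<phi>"
    and H: "\<forall>f\<in>caratheodory_class. wcomp (ell \<circ> lens_map \<alpha>) \<phi> f \<in> caratheodory_class"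
    and r: "0 < r" "r < 1" and key: "(1 - r\<^sup>2) * cos (\<alpha>*pi/2) = 2 * r * sin (\<alpha>*pi/2)"
  shows "sup_norm \<phi> \<le> r"
proof -
  have "cmod (\<phi> z) \<le> r" if z: "z \<in> unit_disk" for z
  proof (rule ccontr)
    define s0 where "s0 = cmod (\<phi> z)"
    assume "\<not> cmod (\<phi> z) \<le> r"
    hence s0r: "r < s0" by (simp add: s0_def)
    have "\<phi> z \<in> unit_disk" using sch z by (auto simp: schwarz_type_def)
    hence s01: "s0 < 1" by (simp add: s0_def unit_disk_def)
    define r1 where "r1 = (r + s0) / 2"
    have r1: "r < r1" "r1 < s0" "r1 < 1" using s0r s01 by (simp_all add: r1_def)
    define w0 where "w0 = ln (ell z)"
    have tw0: "tau w0 = z" using tau_ln_ell(1)[OF z] by (simp add: w0_def)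
    define b0 where "b0 = \<bar>Im w0\<bar>"
    have b0: "b0 < pi/2" "0 \<le> b0" using tau_ln_ell(2)[OF z] by (simp_all add: b0_def w0_def)
    define g where "g = (\<lambda>\<beta>::real. (1 - r1\<^sup>2) * cos (\<alpha> * \<beta>) - 2 * r1 * sin (\<alpha> * \<beta>))"
    have ap: "0 < \<alpha> * pi" "\<alpha> * pi < pi" using a by simp_all
    have cpos: "cos (\<alpha>*pi/2) > 0" using ap by (intro cos_gt_zero_pi; linarith)
    have gneg: "g (pi/2) < 0"
      using g_neg[OF r(1) r1(1) r1(3) cpos key] by (simp add: g_def)
    have "(g \<longlongrightarrow> g (pi/2)) (at (pi/2))" unfolding g_def by (intro tendsto_intros)
    hence "(g \<longlongrightarrow> g (pi/2)) (at_left (pi/2))" by (rule tendsto_mono[OF at_le, rotated]) simp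
    hence ev1: "eventually (\<lambda>\<beta>. g \<beta> < 0) (at_left (pi/2))" using gneg by (rule order_tendstoD(2))
    have ev2: "eventually (\<lambda>\<beta>. \<beta> \<in> {b0<..<pi/2}) (at_left (pi/2))"
      using b0 by (intro eventually_at_left_real) simp
    obtain \<beta> where \<beta>: "g \<beta> < 0" "b0 < \<beta>" "\<beta> < pi/2"
      using eventually_happens'[OF _ eventually_conj[OF ev1 ev2]] trivial_limit_at_left_real by auto
    have \<beta>0: "0 < \<beta>" using \<beta> b0 by linarith
    have line: "cmod (\<phi> (tau w)) < r1" if "\<bar>Im w\<bar> = \<beta>" for w
      using line_bound[OF a sch H \<beta>0 \<beta>(3) _ _ that] \<beta>(1) r1 r by (simp add: g_def)
    have "cmod (\<phi> (tau w0)) \<le> r1"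
      using PL[OF sch \<beta>0 \<beta>(3) _ r1(3) line] r r1 \<beta> by (simp add: b0_def)
    thus False using r1 tw0 by (simp add: s0_def)
  qed
  moreover have "unit_disk \<noteq> {}" by (auto simp: unit_disk_def)
  ultimately show ?thesis unfolding sup_norm_def by (intro cSUP_least) auto
qed

theorem proposition3p7:
  fixes \<alpha> R :: real and \<phi> :: "complex \<Rightarrow> complex"
  assumes "0 < \<alpha>" "\<alpha> < 1"
    and "schwarz_type \<phi>"
    and "0 \<le> R" "R < 1" "2 * R / (1 + R\<^sup>2) = sin (\<alpha> * pi / 2)"
  shows "(\<forall>f\<in>caratheodory_class. wcomp (ell \<circ> lens_map \<alpha>) \<phi> f \<in> caratheodory_class)
         \<longleftrightarrow> sup_norm \<phi> \<le> (1 - R) / (1 + R)"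
proof -
  define r where "r = (1 - R) / (1 + R)"
  have sp: "sin (\<alpha> * pi / 2) > 0" using assms(1,2) by (intro sin_gt_zero) auto
  have ap: "0 < \<alpha> * pi" "\<alpha> * pi < pi" using assms(1,2) by simp_all
  have cp: "cos (\<alpha> * pi / 2) > 0" using ap by (intro cos_gt_zero_pi; linarith)
  have D: "1 + R\<^sup>2 > 0" by (simp add: add_pos_nonneg)
  have R0: "R > 0"
  proof (rule ccontr)
    assume "\<not> R > 0" hence "R = 0" using assms(4) by simp
    thus False using sp assms(6) by simp
  qed
  have r: "0 < r" "r < 1" using R0 assms(5) by (simp_all add: r_def field_simps)
  have c: "cos (\<alpha> * pi / 2) = (1 - R\<^sup>2) / (1 + R\<^sup>2)"
  proof (rule power2_eq_imp_eq)
    have "(cos (\<alpha> * pi / 2))\<^sup>2 = 1 - (sin (\<alpha> * pi / 2))\<^sup>2" by (simp add: cos_squared_eq)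
    also have "\<dots> = 1 - (2 * R / (1 + R\<^sup>2))\<^sup>2" using assms(6) by simp
    also have "\<dots> = ((1 + R\<^sup>2)\<^sup>2 - (2 * R)\<^sup>2) / (1 + R\<^sup>2)\<^sup>2"
      using D by (simp add: power_divide diff_divide_distrib)
    also have "(1 + R\<^sup>2)\<^sup>2 - (2 * R)\<^sup>2 = (1 - R\<^sup>2)\<^sup>2" by (simp add: power2_eq_square algebra_simps)
    also have "(1 - R\<^sup>2)\<^sup>2 / (1 + R\<^sup>2)\<^sup>2 = ((1 - R\<^sup>2) / (1 + R\<^sup>2))\<^sup>2" by (simp add: power_divide)
    finally show "(cos (\<alpha> * pi / 2))\<^sup>2 = ((1 - R\<^sup>2) / (1 + R\<^sup>2))\<^sup>2" .
    show "0 \<le> cos (\<alpha> * pi / 2)" using cp by simp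
    show "0 \<le> (1 - R\<^sup>2) / (1 + R\<^sup>2)" using assms(4,5) D
      by (intro divide_nonneg_pos) (auto simp: abs_square_le_1)
  qed
  have key: "(1 - r\<^sup>2) * cos (\<alpha>*pi/2) = 2 * r * sin (\<alpha>*pi/2)"
  proof -
    have P: "1 + R \<noteq> 0" using R0 by simp
    have Q: "1 + R\<^sup>2 \<noteq> 0" using D by simp
    have h1: "1 - r\<^sup>2 = 4 * R / (1 + R)\<^sup>2"
    proof -
      have r2: "r\<^sup>2 = (1 - R)\<^sup>2 / (1 + R)\<^sup>2" unfolding r_def by (rule power_divide)
      have "1 - r\<^sup>2 = ((1 + R)\<^sup>2 - (1 - R)\<^sup>2) / (1 + R)\<^sup>2"
        unfolding r2 using P by (simp add: diff_divide_distrib)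
      also have "(1 + R)\<^sup>2 - (1 - R)\<^sup>2 = 4 * R" by (simp add: power2_eq_square algebra_simps)
      finally show ?thesis .
    qed
    have "(1 - r\<^sup>2) * cos (\<alpha>*pi/2) = 4 * R * (1 - R) * (1 + R) / ((1 + R)\<^sup>2 * (1 + R\<^sup>2))"
      unfolding h1 c by (simp add: power2_eq_square algebra_simps)
    also have "\<dots> = 4 * R * (1 - R) / ((1 + R) * (1 + R\<^sup>2))"
      using P Q by (simp add: power2_eq_square)
    also have "\<dots> = 2 * r * sin (\<alpha>*pi/2)"
      unfolding assms(6)[symmetric] r_def using P Q by (simp add: field_simps)
    finally show ?thesis .
  qed
  show ?thesis unfolding r_def[symmetric]
    using suff[OF assms(1,2,3) _ r(2) key] nec[OF assms(1,2,3) _ r key] r by auto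
qed

end
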